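(* Let $A$ be an infinite set, fix $z\in A$, put $A'=A\setminus\{z\}$ and let $p\in[1,\infty)$. Let $L(A)$ be Lipscomb's space (defined in the context) and let $s_p:L(A)\to l^p(A)$ be given by $s_p(\widehat{\alpha})=p_p(\alpha)$. Then $s_p$ is (well defined and) injective; equivalently, if $\alpha,\beta\in N(A)$ satisfy $p_p(\alpha)=p_p(\beta)$, then $\alpha$ and $\beta$ are equivalent.
   Context: $l^p(A)$ is the set of families $x=(x_a)_{a\in A'}$ of real numbers with $x_a=0$ for all but countably many $a$ and $\sum_a|x_a|^p<\infty$, with metric $d_p(x,y)=(\sum_a|x_a-y_a|^p)^{1/p}$. $N(A)$ is the set of all sequences $\alpha=a_1a_2a_3\ldots$ with $a_k\in A$ ($A$ discrete), with metric $d(v,v')=1/k$ where $k$ is the first index at which $v,v'$ differ, and $d(v,v)=0$. Two sequences are equivalent if they are equal or if one is $a_1\ldots a_{k-2}a_{k-1}a_ka_ka_k\ldots$ and the other is $a_1\ldots a_{k-2}a_ka_{k-1}a_{k-1}a_{k-1}\ldots$ for some $k\ge 2$ and $a_{k-1}\neq a_k$ (the prefix $a_1\ldots a_{k-2}$ may be empty); $L(A)$ is the quotient of $N(A)$ by this relation and $\widehat{\alpha}$ denotes the class of $\alpha$. The map $p_p:N(A)\to l^p(A)$ is $p_p(\alpha)=(\alpha_b)_{b\in A'}$ where, for $\alpha=a_1a_2\ldots$, $\alpha_b=\sum_{k:\,a_k=b}2^{-k}$ (and $\alpha_b=0$ if no $a_k$ equals $b$). *)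

theory Defs
  imports "HOL-Analysis.Analysis"
begin

text \<open>Sequences a_1 a_2 a_3 ... are represented 0-indexed: a_k = alpha (k - 1).\<close>

definition baire_N :: "'a set \<Rightarrow> (nat \<Rightarrow> 'a) set" where
  "baire_N A = {\<alpha>. \<forall>k. \<alpha> k \<in> A}"

definition lp_space :: "real \<Rightarrow> 'a set \<Rightarrow> ('a \<Rightarrow> real) set" where
  "lp_space p A' = {x. (\<forall>a. a \<notin> A' \<longrightarrow> x a = 0) \<and> countable {a. x a \<noteq> 0}
                      \<and> (\<lambda>a. \<bar>x a\<bar> powr p) summable_on A'}"

definition pp_map :: "'a set \<Rightarrow> 'a \<Rightarrow> (nat \<Rightarrow> 'a) \<Rightarrow> ('a \<Rightarrow> real)" where
  "pp_map A z \<alpha> = (\<lambda>b. if b \<in> A - {z}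
       then (\<Sum>i. if \<alpha> i = b then (1/2::real) ^ Suc i else 0) else 0)"

text \<open>alpha = a_1..a_{k-2} c d d d ..., beta = a_1..a_{k-2} d c c c ..., c ~= d, k >= 2;
  here m = k - 2 is the length of the common prefix.\<close>
definition lip_rel :: "(nat \<Rightarrow> 'a) \<Rightarrow> (nat \<Rightarrow> 'a) \<Rightarrow> bool" where
  "lip_rel \<alpha> \<beta> \<longleftrightarrow> (\<exists>m c d. c \<noteq> d \<and> (\<forall>i<m. \<alpha> i = \<beta> i)
      \<and> \<alpha> m = c \<and> (\<forall>j>m. \<alpha> j = d) \<and> \<beta> m = d \<and> (\<forall>j>m. \<beta> j = c))"

definition lip_equiv :: "(nat \<Rightarrow> 'a) \<Rightarrow> (nat \<Rightarrow> 'a) \<Rightarrow> bool" where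
  "lip_equiv \<alpha> \<beta> \<longleftrightarrow> \<alpha> = \<beta> \<or> lip_rel \<alpha> \<beta> \<or> lip_rel \<beta> \<alpha>"

end

theory Submission
  imports Defs
begin

definition SS :: "(nat \<Rightarrow> bool) \<Rightarrow> real" where
  "SS P = (\<Sum>i. if P i then (1/2::real) ^ Suc i else 0)"

lemma summ_ind: "summable (\<lambda>i. if P i then (1/2::real) ^ Suc i else 0)"
  by (rule summable_comparison_test[OF _ sums_summable[OF power_half_series]]) auto

lemma SS_True: "SS (\<lambda>i. True) = 1"
  unfolding SS_def by (simp only: if_True) (rule sums_unique[OF power_half_series, symmetric])

lemma SS_False: "SS (\<lambda>i. False) = 0"
  by (simp add: SS_def)

lemma SS_nonneg: "0 \<le> SS P"
  unfolding SS_def by (rule suminf_nonneg[OF summ_ind]) auto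

lemma SS_le1: "SS P \<le> 1"
proof -
  have "SS P \<le> SS (\<lambda>i. True)" unfolding SS_def
    by (rule suminf_le[OF _ summ_ind summ_ind]) auto
  then show ?thesis by (simp add: SS_True)
qed

lemma SS_zero: assumes "SS P = 0" shows "\<not> P k"
proof
  assume "P k"
  have "0 < SS P" unfolding SS_def
    by (rule suminf_pos2[OF summ_ind, where i=k]) (use \<open>P k\<close> in auto)
  then show False using assms by simp
qed

lemma SS_one: assumes "SS P = 1" shows "P k"
proof -
  have "SS (\<lambda>i. True) - SS P = SS (\<lambda>i. \<not> P i)"
    unfolding SS_def by (subst suminf_diff[OF summ_ind summ_ind]) (auto intro!: arg_cong[where f=suminf])
  then have "SS (\<lambda>i. \<not> P i) = 0" using assms SS_True by simp
  from SS_zero[OF this] show ?thesis by simp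
qed

lemma decomp:
  "(\<Sum>i. if \<alpha> i = b then (1/2::real) ^ Suc i else 0) =
     (\<Sum>i<m. if \<alpha> i = b then (1/2::real) ^ Suc i else 0)
     + (1/2::real) ^ Suc m * ((if \<alpha> m = b then 1 else 0) + SS (\<lambda>i. \<alpha> (Suc m + i) = b))"
proof -
  let ?f = "\<lambda>i. if \<alpha> i = b then (1/2::real) ^ Suc i else 0"
  have 1: "suminf ?f = (\<Sum>n. ?f (n + Suc m)) + (\<Sum>i<Suc m. ?f i)"
    by (rule suminf_split_initial_segment[OF summ_ind])
  have "(\<Sum>n. ?f (n + Suc m)) = (\<Sum>n. (1/2::real) ^ Suc m * (if \<alpha> (Suc m + n) = b then (1/2::real) ^ Suc n else 0))"
    by (rule arg_cong[where f=suminf]) (auto simp: power_add add.commute)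
  also have "\<dots> = (1/2::real) ^ Suc m * SS (\<lambda>i. \<alpha> (Suc m + i) = b)"
    unfolding SS_def by (rule suminf_mult[OF summ_ind])
  finally show ?thesis using 1 by (simp add: algebra_simps)
qed

lemma rel_eq: assumes "lip_rel \<alpha> \<beta>"
  shows "(\<Sum>i. if \<alpha> i = b then (1/2::real) ^ Suc i else 0) = (\<Sum>i. if \<beta> i = b then (1/2::real) ^ Suc i else 0)"
proof -
  obtain m c d where H: "c \<noteq> d" "\<forall>i<m. \<alpha> i = \<beta> i" "\<alpha> m = c" "\<forall>j>m. \<alpha> j = d"
    "\<beta> m = d" "\<forall>j>m. \<beta> j = c" using assms unfolding lip_rel_def by blast
  have p: "(\<Sum>i<m. if \<alpha> i = b then (1/2::real) ^ Suc i else 0) = (\<Sum>i<m. if \<beta> i = b then (1/2::real) ^ Suc i else 0)"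
    using H(2) by (intro sum.cong) auto
  have a: "SS (\<lambda>i. \<alpha> (Suc m + i) = b) = SS (\<lambda>i. d = b)" using H(4) by (simp add: SS_def)
  have b: "SS (\<lambda>i. \<beta> (Suc m + i) = b) = SS (\<lambda>i. c = b)" using H(6) by (simp add: SS_def)
  show ?thesis
    apply (subst (1 2) decomp[where m=m])
    using p a b H(1,3,5) by (cases "b = c"; cases "b = d") (auto simp: SS_True SS_False)
qed

lemma key:
  assumes "\<alpha> \<in> baire_N A" "\<beta> \<in> baire_N A" "\<forall>i<m. \<alpha> i = \<beta> i" "\<alpha> m = c" "\<beta> m = d" "c \<noteq> d"
    "d \<noteq> z" "d \<in> A"
    and eq: "\<And>b. b \<in> A - {z} \<Longrightarrow> (\<Sum>i. if \<alpha> i = b then (1/2::real) ^ Suc i else 0) = (\<Sum>i. if \<beta> i = b then (1/2::real) ^ Suc i else 0)"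
  shows "lip_rel \<alpha> \<beta>"
proof -
  define Ta where "Ta b = SS (\<lambda>i. \<alpha> (Suc m + i) = b)" for b
  define Tb where "Tb b = SS (\<lambda>i. \<beta> (Suc m + i) = b)" for b
  have E: "(if c = b then 1 else 0) + Ta b = (if d = b then 1 else 0) + Tb b" if "b \<in> A - {z}" for b
  proof -
    have p: "(\<Sum>i<m. if \<alpha> i = b then (1/2::real) ^ Suc i else 0) = (\<Sum>i<m. if \<beta> i = b then (1/2::real) ^ Suc i else 0)"
      using assms(3) by (intro sum.cong) auto
    have "(1/2::real) ^ Suc m * ((if \<alpha> m = b then 1 else 0) + Ta b) = (1/2::real) ^ Suc m * ((if \<beta> m = b then 1 else 0) + Tb b)"
      using eq[OF that] p decomp[of \<alpha> b m] decomp[of \<beta> b m] unfolding Ta_def Tb_def by simp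
    then show ?thesis using assms(4,5) by simp
  qed
  have Ed: "Ta d = 1 + Tb d" using E[of d] assms(6,7,8) by auto
  have "Tb d \<ge> 0" "Ta d \<le> 1" by (simp_all add: Ta_def Tb_def SS_le1 SS_nonneg)
  then have Tad: "Ta d = 1" and Tbd: "Tb d = 0" using Ed by linarith+
  have A1: "\<alpha> j = d" if "j > m" for j
    using SS_one[OF Tad[unfolded Ta_def], of "j - Suc m"] that by simp
  have B1: "\<beta> j = c" if "j > m" for j
  proof (rule ccontr)
    assume nc: "\<beta> j \<noteq> c"
    let ?b = "\<beta> j"
    have bA: "?b \<in> A" using assms(2) by (simp add: baire_N_def)
    have nd: "?b \<noteq> d" using SS_zero[OF Tbd[unfolded Tb_def], of "j - Suc m"] that by simp
    show False
    proof (cases "?b = z")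
      case False
      have "Ta ?b = 0" unfolding Ta_def using A1 nd by (simp add: SS_def)
      then have T0: "Tb ?b = 0" using E[of ?b] nc nd bA False by auto
      show False using SS_zero[OF T0[unfolded Tb_def], of "j - Suc m"] that by simp
    next
      case True
      then have cz: "c \<noteq> z" using nc by simp
      have cA: "c \<in> A" using assms(1,4) by (auto simp: baire_N_def)
      have "1 + Ta c = Tb c" using E[of c] cz cA assms(6) by auto
      moreover have "Ta c \<ge> 0" "Tb c \<le> 1" by (simp_all add: Ta_def Tb_def SS_le1 SS_nonneg)
      ultimately have T1: "Tb c = 1" by linarith
      show False using SS_one[OF T1[unfolded Tb_def], of "j - Suc m"] that nc by simp
    qed
  qed
  show ?thesis unfolding lip_rel_def
    by (rule exI[of _ m], rule exI[of _ c], rule exI[of _ d]) (use assms(3,4,5,6) A1 B1 in simp)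
qed

theorem proposition2p1:
  fixes A :: "'a set" and z :: 'a and p :: real
  assumes "infinite A" and "z \<in> A" and "1 \<le> p"
  shows "(\<forall>\<alpha>\<in>baire_N A. pp_map A z \<alpha> \<in> lp_space p (A - {z}))
       \<and> (\<forall>\<alpha>\<in>baire_N A. \<forall>\<beta>\<in>baire_N A.
            pp_map A z \<alpha> = pp_map A z \<beta> \<longleftrightarrow> lip_equiv \<alpha> \<beta>)"
proof (intro conjI ballI)
  fix \<alpha> assume "\<alpha> \<in> baire_N A"
  let ?x = "pp_map A z \<alpha>"
  let ?f = "\<lambda>b. (\<Sum>i. if \<alpha> i = b then (1/2::real) ^ Suc i else 0)"
  have f01: "0 \<le> ?f b \<and> ?f b \<le> 1" for b
    using SS_nonneg[of "\<lambda>i. \<alpha> i = b"] SS_le1[of "\<lambda>i. \<alpha> i = b"] by (simp add: SS_def)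
  have "{a. ?x a \<noteq> 0} \<subseteq> range \<alpha>"
  proof
    fix a assume "a \<in> {a. ?x a \<noteq> 0}"
    then have "?f a \<noteq> 0" by (auto simp: pp_map_def split: if_splits)
    show "a \<in> range \<alpha>"
    proof (rule ccontr)
      assume "a \<notin> range \<alpha>"
      then have "(\<lambda>i. if \<alpha> i = a then (1/2::real) ^ Suc i else 0) = (\<lambda>i. 0)"
      proof (intro ext)
        fix i
        have "\<alpha> i \<noteq> a" using \<open>a \<notin> range \<alpha>\<close> by (metis rangeI)
        then show "(if \<alpha> i = a then (1/2::real) ^ Suc i else 0) = 0" by simp
      qed
      then show False using \<open>?f a \<noteq> 0\<close> by simp
    qed
  qed
  then have cnt: "countable {a. ?x a \<noteq> 0}"
    by (rule countable_subset) (intro countable_image, simp)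
  have sumF: "sum ?f F \<le> 1" if "finite F" for F
  proof -
    have "sum ?f F = (\<Sum>n. \<Sum>b\<in>F. if \<alpha> n = b then (1/2::real) ^ Suc n else 0)"
      by (rule suminf_sum[symmetric]) (rule summ_ind)
    also have "\<dots> = SS (\<lambda>n. \<alpha> n \<in> F)" unfolding SS_def
      using that by (intro arg_cong[where f=suminf] ext) (simp add: sum.delta')
    also have "\<dots> \<le> 1" by (rule SS_le1)
    finally show ?thesis .
  qed
  have summ: "(\<lambda>a. \<bar>?x a\<bar> powr p) summable_on (A - {z})"
  proof (rule nonneg_bdd_above_summable_on)
    show "bdd_above ((\<lambda>F. sum (\<lambda>a. \<bar>?x a\<bar> powr p) F) ` {F. F \<subseteq> A - {z} \<and> finite F})"
    proof (rule bdd_aboveI2)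
      fix F assume F: "F \<in> {F. F \<subseteq> A - {z} \<and> finite F}"
      have "sum (\<lambda>a. \<bar>?x a\<bar> powr p) F \<le> sum ?f F"
      proof (rule sum_mono)
        fix a assume "a \<in> F"
        then have xa: "?x a = ?f a" using F by (auto simp: pp_map_def)
        have "?f a powr p \<le> ?f a powr 1"
          using f01[of a] assms(3) by (intro powr_mono') simp_all
        moreover have "\<bar>?x a\<bar> = ?f a" using f01[of a] xa by simp
        ultimately show "\<bar>?x a\<bar> powr p \<le> ?f a" using f01[of a] by simp
      qed
      also have "\<dots> \<le> 1" using F sumF by auto
      finally show "sum (\<lambda>a. \<bar>?x a\<bar> powr p) F \<le> 1" .
    qed
  qed auto
  have van: "\<forall>a. a \<notin> A - {z} \<longrightarrow> ?x a = 0" by (simp add: pp_map_def)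
  show "?x \<in> lp_space p (A - {z})"
    unfolding lp_space_def using van cnt summ by blast
next
  fix \<alpha> \<beta> assume a: "\<alpha> \<in> baire_N A" and b: "\<beta> \<in> baire_N A"
  show "pp_map A z \<alpha> = pp_map A z \<beta> \<longleftrightarrow> lip_equiv \<alpha> \<beta>"
  proof
    assume le: "lip_equiv \<alpha> \<beta>"
    have "(\<Sum>i. if \<alpha> i = b then (1/2::real) ^ Suc i else 0) = (\<Sum>i. if \<beta> i = b then (1/2::real) ^ Suc i else 0)" for b
      using le unfolding lip_equiv_def
    proof (elim disjE)
      assume "lip_rel \<beta> \<alpha>" then show ?thesis using rel_eq[of \<beta> \<alpha> b] by simp
    next
      assume "lip_rel \<alpha> \<beta>" then show ?thesis by (rule rel_eq)
    qed simp
    then show "pp_map A z \<alpha> = pp_map A z \<beta>"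
      unfolding pp_map_def by (intro ext) simp
  next
    assume eqpp: "pp_map A z \<alpha> = pp_map A z \<beta>"
    have eq: "(\<Sum>i. if \<alpha> i = b then (1/2::real) ^ Suc i else 0) = (\<Sum>i. if \<beta> i = b then (1/2::real) ^ Suc i else 0)"
      if "b \<in> A - {z}" for b using fun_cong[OF eqpp, of b] that by (simp add: pp_map_def)
    show "lip_equiv \<alpha> \<beta>"
    proof (cases "\<alpha> = \<beta>")
      case True then show ?thesis by (simp add: lip_equiv_def)
    next
      case False
      then have "\<exists>n. \<alpha> n \<noteq> \<beta> n" by auto
      then obtain m where m: "\<alpha> m \<noteq> \<beta> m" "\<forall>i<m. \<alpha> i = \<beta> i"
        using exists_least_iff[of "\<lambda>n. \<alpha> n \<noteq> \<beta> n"] by blast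
      have inA: "\<alpha> m \<in> A" "\<beta> m \<in> A" using a b by (auto simp: baire_N_def)
      show ?thesis
      proof (cases "\<beta> m = z")
        case False
        have "lip_rel \<alpha> \<beta>"
          by (rule key[OF a b m(2) refl refl m(1) False inA(2) eq])
        then show ?thesis by (simp add: lip_equiv_def)
      next
        case True
        then have "\<alpha> m \<noteq> z" using m(1) by simp
        have m2: "\<forall>i<m. \<beta> i = \<alpha> i" using m(2) by simp
        have m1: "\<beta> m \<noteq> \<alpha> m" using m(1) by simp
        have eq2: "(\<Sum>i. if \<beta> i = b then (1/2::real) ^ Suc i else 0) = (\<Sum>i. if \<alpha> i = b then (1/2::real) ^ Suc i else 0)"
          if "b \<in> A - {z}" for b using eq[OF that] by simp
        have "lip_rel \<beta> \<alpha>"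
          by (rule key[OF b a m2 refl refl m1 \<open>\<alpha> m \<noteq> z\<close> inA(1) eq2])
        then show ?thesis by (simp add: lip_equiv_def)
      qed
    qed
  qed
qed

end
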